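(* Let $q=2^t$. Let $r+I\in\ker\pi_{P_1}\cap C_k(P,L)$, let $r^*\in R_P^*$ be its representative, and write $r^*=(1+x_3^{q-1})h$ with $h\in R_P^*$ not involving $x_3$. Then for every non-constant monomial $m$ of $h$, every digit of $m$ (in its 2-adic $t$-tuple) has degree exactly $1$.
   Context: Let $k=\mathbb{F}_q$, $q=2^t$, $V=k^4$ with coordinates $x_0,\dots,x_3$ relative to a symplectic basis $e_0,\dots,e_3$ of a nonsingular alternating form with $(e_0,e_3)=(e_1,e_2)=1$; $P$ the points (1-dim subspaces) and $L$ the totally isotropic 2-dim subspaces (lines). $R=k[x_0,\dots,x_3]$, $I=(x_i^q-x_i)_{i}$, $R^*$ the polynomials with each variable of degree $\le q-1$. $R_P^*$ is the $k$-span of monomials $x_0^{m_0}\cdots x_3^{m_3}$ with $0\le m_i\le q-1$ and $\sum m_i$ divisible by $q-1$; $R_P=\{f+I:f\in R_P^*\}$, identified with functions $P\to k$ by evaluation at nonzero vectors. For a line $\ell$, $\delta_\ell^*\in R_P^*$ is the polynomial representing the characteristic function of $\ell$ (value $1$ at $v\neq0$ iff $\langle v\rangle\in\ell$, else $0$), and $C_k(P,L)$ is the $k$-span of $\{\delta_\ell^*+I:\ell\in L\}$. $P_1$ is the set of points with $x_3$-coordinate nonzero and $\pi_{P_1}$ is restriction of functions to $P_1$. Any monomial $m=x_0^{m_0}x_1^{m_1}x_2^{m_2}x_3^{m_3}$ with $0\le m_i\le q-1$ has 2-adic $t$-tuple $[f_0,\dots,f_{t-1}]$, where, writing $m_i=\sum_{j=0}^{t-1}n_{i,j}2^j$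 with $n_{i,j}\in\{0,1\}$, the $j$-th digit is $f_j=x_0^{n_{0,j}}x_1^{n_{1,j}}x_2^{n_{2,j}}x_3^{n_{3,j}}$; thus $m=f_0f_1^2f_2^{4}\cdots f_{t-1}^{2^{t-1}}$. *)

theory Defs
  imports Main "HOL-Library.Cardinality"
begin

text \<open>Vectors of V = k^4: functions nat => k, supported on coordinates 0..3.\<close>
definition Vec :: "(nat \<Rightarrow> 'k::field) set" where
  "Vec = {v. \<forall>i\<ge>4. v i = 0}"

definition bform :: "(nat \<Rightarrow> 'k::field) \<Rightarrow> (nat \<Rightarrow> 'k) \<Rightarrow> 'k" where
  "bform u v = u 0 * v 3 - u 3 * v 0 + u 1 * v 2 - u 2 * v 1"

text \<open>Lines: totally isotropic 2-dimensional subspaces of V (as sets of vectors).\<close>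
definition is_line :: "(nat \<Rightarrow> 'k::field) set \<Rightarrow> bool" where
  "is_line S \<longleftrightarrow>
     (\<exists>u\<in>Vec. \<exists>w\<in>Vec. (\<forall>a b. (\<lambda>i. a * u i + b * w i) = (\<lambda>i. 0) \<longrightarrow> a = 0 \<and> b = 0)
        \<and> S = {x. \<exists>a b. x = (\<lambda>i. a * u i + b * w i)})
     \<and> (\<forall>x\<in>S. \<forall>y\<in>S. bform x y = 0)"

definition Lines :: "(nat \<Rightarrow> 'k::field) set set" where
  "Lines = {S. is_line S}"

text \<open>Exponent vectors of monomials in R^* (each exponent at most q-1).\<close>
definition exps :: "nat \<Rightarrow> (nat \<Rightarrow> nat) set" where
  "exps q = {e. (\<forall>i<4. e i \<le> q - 1) \<and> (\<forall>i\<ge>4. e i = 0)}"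

text \<open>Polynomials are coefficient functions on exponent vectors.
  A polynomial lies in R^* iff its support is contained in exps q.\<close>
definition in_Rstar :: "nat \<Rightarrow> ((nat \<Rightarrow> nat) \<Rightarrow> 'k::field) \<Rightarrow> bool" where
  "in_Rstar q p \<longleftrightarrow> (\<forall>e. p e \<noteq> 0 \<longrightarrow> e \<in> exps q)"

definition in_RPstar :: "nat \<Rightarrow> ((nat \<Rightarrow> nat) \<Rightarrow> 'k::field) \<Rightarrow> bool" where
  "in_RPstar q p \<longleftrightarrow> in_Rstar q p \<and> (\<forall>e. p e \<noteq> 0 \<longrightarrow> (q - 1) dvd (\<Sum>i<4. e i))"

text \<open>Evaluation of a polynomial in R^* at a vector (0^0 = 1).\<close>
definition peval :: "nat \<Rightarrow> ((nat \<Rightarrow> nat) \<Rightarrow> 'k::field) \<Rightarrow> (nat \<Rightarrow> 'k) \<Rightarrow> 'k" where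
  "peval q p v = (\<Sum>e\<in>exps q. p e * (\<Prod>i<4. v i ^ e i))"

definition pmul :: "nat \<Rightarrow> ((nat \<Rightarrow> nat) \<Rightarrow> 'k::field) \<Rightarrow> ((nat \<Rightarrow> nat) \<Rightarrow> 'k) \<Rightarrow> (nat \<Rightarrow> nat) \<Rightarrow> 'k" where
  "pmul q p1 p2 e = (\<Sum>a\<in>exps q. \<Sum>b\<in>exps q. if (\<lambda>i. a i + b i) = e then p1 a * p2 b else 0)"

definition one_plus_x3 :: "nat \<Rightarrow> (nat \<Rightarrow> nat) \<Rightarrow> 'k::field" where
  "one_plus_x3 q e = (if e = (\<lambda>i. 0) then 1 else 0)
                     + (if e = (\<lambda>i. if i = 3 then q - 1 else 0) then 1 else 0)"

text \<open>delta_l^* + I as a function on V: the characteristic function of the subspace l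
  (value 1 at v iff v is in l; in particular value 1 at 0).  C_k(P,L) is the span of these.\<close>
definition in_code :: "((nat \<Rightarrow> 'k::field) \<Rightarrow> 'k) \<Rightarrow> bool" where
  "in_code f \<longleftrightarrow> (\<exists>c :: (nat \<Rightarrow> 'k) set \<Rightarrow> 'k.
      \<forall>v\<in>Vec. f v = (\<Sum>S\<in>Lines. c S * (if v \<in> S then 1 else 0)))"

definition digit_deg :: "(nat \<Rightarrow> nat) \<Rightarrow> nat \<Rightarrow> nat" where
  "digit_deg e j = (\<Sum>i<4. (e i div 2 ^ j) mod 2)"

end

theory Submission
  imports Defs "HOL-Computational_Algebra.Polynomial"
begin


definition bitn :: "nat \<Rightarrow> nat \<Rightarrow> nat" where "bitn n j = n div 2 ^ j mod 2"

lemma bin_exp: "n mod 2 ^ t = (\<Sum>j<t. bitn n j * 2 ^ j)"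
proof (induction t)
  case 0 then show ?case by simp
next
  case (Suc t)
  have "n mod (2 ^ t * 2) = 2 ^ t * (n div 2 ^ t mod 2) + n mod 2 ^ t"
    by (rule mod_mult2_eq)
  then show ?case using Suc by (simp add: bitn_def mult.commute)
qed

lemma bin_exp': "n < 2 ^ t \<Longrightarrow> n = (\<Sum>j<t. bitn n j * 2 ^ j)"
  using bin_exp[of n t] by simp

lemma bitn_le1: "bitn n j \<le> 1" by (simp add: bitn_def)

lemma sum_pow2: "(\<Sum>j<t. (2::nat) ^ j) = 2 ^ t - 1"
  by (induction t) auto

lemma compl_bits: "\<forall>t d e. d + e = 2 ^ t - 1 \<longrightarrow> j < t \<longrightarrow> bitn d j + bitn e j = 1"
proof (induction j)
  case 0
  show ?case
  proof (intro allI impI)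
    fix t d e :: nat assume h: "d + e = 2 ^ t - 1" "0 < t"
    then obtain p :: nat where p: "2 ^ t = 2 * p" "p \<ge> 1"
      by (metis One_nat_def Suc_leI gr0_conv_Suc nat_zero_less_power_iff pos2 power_Suc zero_less_mult_pos)
    show "bitn d 0 + bitn e 0 = 1" using h p unfolding bitn_def by simp presburger
  qed
next
  case (Suc j)
  show ?case
  proof (intro allI impI)
    fix t d e :: nat assume h: "d + e = 2 ^ t - 1" "Suc j < t"
    then obtain t' where t': "t = Suc t'" by (cases t) auto
    define p :: nat where "p = 2 ^ t'"
    have p1: "p \<ge> 1" by (simp add: p_def)
    have "d + e = 2 * p - 1" using h t' p_def by simp
    then have m: "d mod 2 + e mod 2 = 1" using p1 by presburger
    have "2 * (d div 2) + d mod 2 = d" "2 * (e div 2) + e mod 2 = e" by simp_all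
    then have "d div 2 + e div 2 = p - 1" using m p1 \<open>d + e = 2 * p - 1\<close> by arith
    then have "bitn (d div 2) j + bitn (e div 2) j = 1"
      using Suc.IH h t' p_def by auto
    then show "bitn d (Suc j) + bitn e (Suc j) = 1"
      by (simp add: bitn_def div_mult2_eq power_Suc)
  qed
qed

lemma parity_lemma: "\<forall>X Y. (\<forall>j<t. X j + Y j \<le> (3::nat)) \<longrightarrow> (\<Sum>j<t. X j * 2 ^ j) = 2 ^ t - 1
   \<longrightarrow> (\<Sum>j<t. Y j * 2 ^ j) = 2 ^ t - 1 \<longrightarrow> (\<forall>j<t. X j = 1 \<and> Y j = 1)"
proof (induction t)
  case 0 then show ?case by simp
next
  case (Suc t)
  show ?case
  proof (rule allI, rule allI, intro impI)
    fix X Y :: "nat \<Rightarrow> nat"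
    assume b: "\<forall>j<Suc t. X j + Y j \<le> 3" and sx: "(\<Sum>j<Suc t. X j * 2 ^ j) = 2 ^ Suc t - 1"
      and sy: "(\<Sum>j<Suc t. Y j * 2 ^ j) = 2 ^ Suc t - 1"
    define A where "A = (\<Sum>j<t. X (Suc j) * 2 ^ j)"
    define B where "B = (\<Sum>j<t. Y (Suc j) * 2 ^ j)"
    define P :: nat where "P = 2 ^ t"
    have P1: "P \<ge> 1" by (simp add: P_def)
    have ex: "(\<Sum>j<Suc t. X j * 2 ^ j) = X 0 + 2 * A"
      unfolding A_def by (simp add: sum.lessThan_Suc_shift sum_distrib_left mult.assoc mult.left_commute del: sum.lessThan_Suc)
    have ey: "(\<Sum>j<Suc t. Y j * 2 ^ j) = Y 0 + 2 * B"
      unfolding B_def by (simp add: sum.lessThan_Suc_shift sum_distrib_left mult.assoc mult.left_commute del: sum.lessThan_Suc)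
    have x: "X 0 + 2 * A = 2 * P - 1" using sx ex P_def by simp
    have y: "Y 0 + 2 * B = 2 * P - 1" using sy ey P_def by simp
    have b0: "X 0 + Y 0 \<le> 3" using b by auto
    have "X 0 + 2 * A + 1 = 2 * P" using x P1 by arith
    then have "even (X 0 + 1 + 2 * A)" by (metis add.commute add.left_commute dvd_triv_left)
    then have xo: "odd (X 0)" by simp
    have "Y 0 + 2 * B + 1 = 2 * P" using y P1 by arith
    then have "even (Y 0 + 1 + 2 * B)" by (metis add.commute add.left_commute dvd_triv_left)
    then have yo: "odd (Y 0)" by simp
    have "X 0 \<ge> 1" "Y 0 \<ge> 1" using odd_pos[OF xo] odd_pos[OF yo] by auto
    have "X 0 \<noteq> 2" "Y 0 \<noteq> 2" using xo yo by auto
    have x1: "X 0 = 1" "Y 0 = 1" using b0 \<open>X 0 \<ge> 1\<close> \<open>Y 0 \<ge> 1\<close> \<open>X 0 \<noteq> 2\<close> \<open>Y 0 \<noteq> 2\<close> by arith+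
    have r: "X 0 = 1 \<and> Y 0 = 1 \<and> A = P - 1 \<and> B = P - 1" using x y x1 by auto
    have "\<forall>j<t. X (Suc j) = 1 \<and> Y (Suc j) = 1"
      using Suc.IH[rule_format, of "\<lambda>j. X (Suc j)" "\<lambda>j. Y (Suc j)"] b r A_def B_def P_def by auto
    then show "\<forall>j<Suc t. X j = 1 \<and> Y j = 1" using r
      by (metis less_Suc_eq_0_disj)
  qed
qed




lemma card_zero: "of_nat CARD('k) = (0::'k::{field,finite})"
proof -
  have "(\<Sum>x\<in>(UNIV::'k set). x) = (\<Sum>x\<in>UNIV. x + 1)"
    by (rule sum.reindex_bij_witness[of _ "\<lambda>b. b + 1" "\<lambda>a. a - 1"]) auto
  also have "\<dots> = (\<Sum>x\<in>UNIV. x) + of_nat CARD('k)"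
    by (simp add: sum.distrib)
  finally show ?thesis by simp
qed

lemma char2:
  assumes "CARD('k::{field,finite}) = 2 ^ t"
  shows "(2::'k) = 0" and "t > 0"
proof -
  have "(2::'k) ^ t = 0" using card_zero[where 'k='k] assms by simp
  then show "(2::'k) = 0" "t > 0" by (simp_all add: power_eq_0_iff)
qed

lemma one_eq_neg: "(2::'k::field) = 0 \<Longrightarrow> -(1::'k) = 1"
  by (metis add_eq_0_iff2 one_add_one)

lemma card_nz: "card (UNIV - {0::'k::{field,finite}}) = CARD('k) - 1"
  by (simp add: card_Diff_subset)

lemma fermat:
  fixes x :: "'k::{field,finite}"
  assumes "x \<noteq> 0"
  shows "x ^ (CARD('k) - 1) = 1"
proof -
  let ?N = "UNIV - {0::'k}"
  have "(\<Prod>y\<in>?N. x * y) = (\<Prod>y\<in>?N. y)"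
    by (rule prod.reindex_bij_witness[of _ "\<lambda>b. b / x" "\<lambda>a. x * a"]) (use assms in auto)
  moreover have "(\<Prod>y\<in>?N. x * y) = x ^ card ?N * (\<Prod>y\<in>?N. y)"
    by (simp add: prod.distrib)
  moreover have "(\<Prod>y\<in>?N. y) \<noteq> 0" by simp
  ultimately show ?thesis using card_nz[where 'k='k] by simp
qed

lemma exists_non_root:
  fixes m :: nat
  assumes "0 < m" "\<not> (CARD('k::{field,finite}) - 1) dvd m"
  shows "\<exists>c::'k. c \<noteq> 0 \<and> c ^ m \<noteq> 1"
proof (rule ccontr)
  assume "\<not> ?thesis"
  then have all: "\<And>c::'k. c \<noteq> 0 \<Longrightarrow> c ^ m = 1" by auto
  define Q where "Q = CARD('k) - 1"
  define r where "r = m mod Q"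
  have "card {0::'k, 1} \<le> CARD('k)" by (rule card_mono) auto
  then have Q0: "Q > 0" using Q_def by simp
  have r0: "r > 0" using assms(2) unfolding r_def Q_def by (simp add: dvd_eq_mod_eq_0) 
  have rQ: "r < Q" using Q0 r_def by simp
  have root: "c ^ r = 1" if "c \<noteq> 0" for c :: 'k
  proof -
    have "m = Q * (m div Q) + r" by (simp add: r_def)
    then have "c ^ m = (c ^ Q) ^ (m div Q) * c ^ r" by (metis power_add power_mult)
    then show ?thesis using all[OF that] fermat[OF that] Q_def by simp
  qed
  define p :: "'k poly" where "p = monom 1 r - [:1:]"
  have pnz: "p \<noteq> 0"
  proof
    assume "p = 0"
    then have "coeff p r = 0" by simp
    then show False using r0 by (cases r) (auto simp: p_def coeff_monom)
  qed
  have "degree p \<le> r" unfolding p_def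
    by (metis degree_diff_le degree_monom_le degree_pCons_0 le0 max.bounded_iff one_poly_eq_simps(1)) 
  moreover have "card {x. poly p x = 0} \<le> degree p" using card_poly_roots_bound[OF pnz] .
  moreover have "UNIV - {0} \<subseteq> {x. poly p x = 0}" using root by (auto simp: p_def poly_monom)
  then have "card (UNIV - {0::'k}) \<le> card {x. poly p x = 0}" by (intro card_mono) auto
  ultimately show False using card_nz[where 'k='k] rQ Q_def by simp
qed

lemma powsum:
  assumes "CARD('k::{field,finite}) = 2 ^ t"
  shows "(\<Sum>x\<in>(UNIV::'k set). x ^ m) = (if 0 < m \<and> (CARD('k) - 1) dvd m then 1 else 0)"
proof (cases "m = 0")
  case True
  then show ?thesis using card_zero[where 'k='k] by simp
next
  case False
  show ?thesis
  proof (cases "(CARD('k) - 1) dvd m")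
    case True
    then obtain l where l: "m = (CARD('k) - 1) * l" by auto
    have "(\<Sum>x\<in>(UNIV::'k set). x ^ m) = (\<Sum>x\<in>UNIV - {0}. x ^ m) + 0 ^ m"
      by (simp add: sum.remove[of UNIV 0] add.commute)
    also have "\<dots> = (\<Sum>x\<in>UNIV - {0::'k}. x ^ m)" using False by simp
    also have "\<dots> = (\<Sum>x\<in>UNIV - {0::'k}. 1)"
    proof (rule sum.cong)
      fix x :: 'k assume "x \<in> UNIV - {0}"
      then have "x ^ (CARD('k) - 1) = 1" by (intro fermat) auto
      then show "x ^ m = 1" by (simp add: l power_mult)
    qed simp
    also have "\<dots> = of_nat (CARD('k)) - 1" using card_nz[where 'k='k]
      by (simp add: of_nat_diff)
    also have "\<dots> = 1" using card_zero[where 'k='k] one_eq_neg[OF char2(1)[OF assms]] by simp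
    finally show ?thesis using True False by simp
  next
    case nd: False
    obtain c :: 'k where c: "c \<noteq> 0" "c ^ m \<noteq> 1" using exists_non_root[of m] False nd by auto
    have "(\<Sum>x\<in>(UNIV::'k set). x ^ m) = (\<Sum>x\<in>UNIV. (c * x) ^ m)"
      by (rule sum.reindex_bij_witness[of _ "\<lambda>a. c * a" "\<lambda>b. b / c"]) (use c in auto)
    also have "\<dots> = c ^ m * (\<Sum>x\<in>UNIV. x ^ m)" by (simp add: power_mult_distrib sum_distrib_left)
    finally have "(1 - c ^ m) * (\<Sum>x\<in>(UNIV::'k set). x ^ m) = 0" by (simp add: algebra_simps)
    then show ?thesis using c nd by simp
  qed
qed

lemma frob:
  assumes "(2::'k::field) = 0"
  shows "((x::'k) + y) ^ (2 ^ j) = x ^ (2 ^ j) + y ^ (2 ^ j)"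
proof (induction j)
  case 0 then show ?case by simp
next
  case (Suc j)
  have sq: "(a + b) ^ 2 = a ^ 2 + b ^ 2" for a b :: 'k
  proof -
    have "(a + b) ^ 2 = a ^ 2 + b ^ 2 + 2 * a * b" by (simp add: power2_eq_square algebra_simps)
    then show ?thesis using assms by simp
  qed
  have "(x + y) ^ (2 ^ Suc j) = ((x + y) ^ (2 ^ j)) ^ 2" by (simp add: power_mult[symmetric] mult.commute)
  also have "\<dots> = (x ^ (2 ^ j)) ^ 2 + (y ^ (2 ^ j)) ^ 2" using Suc sq by simp
  also have "\<dots> = x ^ (2 ^ Suc j) + y ^ (2 ^ Suc j)" by (simp add: power_mult[symmetric] mult.commute)
  finally show ?case .
qed




lemma bitn_zero[simp]: "bitn 0 j = 0" by (simp add: bitn_def)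

lemma bitn_01: "bitn n j = 0 \<or> bitn n j = 1" using bitn_le1[of n j] by arith

lemma bitn_if: "(if bitn n j = 1 then 1 else 0) = bitn n j" using bitn_01[of n j] by auto

lemma card_filter_sum: "card {i\<in>{..<(n::nat)}. P i} = (\<Sum>i<n. if P i then 1 else 0)"
  by (simp add: sum.inter_filter[symmetric])

lemma sigma_levels:
  assumes "finite X" "snd ` X \<subseteq> {..<t}"
  shows "(\<Sum>p\<in>X. (2::nat) ^ snd p) = (\<Sum>j<t. card {p\<in>X. snd p = j} * 2 ^ j)"
proof -
  have "(\<Sum>p\<in>X. (2::nat) ^ snd p) = (\<Sum>j<t. \<Sum>p\<in>{x\<in>X. snd x = j}. 2 ^ snd p)"
    using sum.group[OF assms(1) _ assms(2), of "\<lambda>p. (2::nat) ^ snd p"] by simp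
  also have "\<dots> = (\<Sum>j<t. card {p\<in>X. snd p = j} * 2 ^ j)"
    by (intro sum.cong refl) simp
  finally show ?thesis .
qed

lemma comb:
  fixes e :: "nat \<Rightarrow> nat"
  assumes ebd: "\<forall>i<3. e i \<le> 2 ^ t - 1"
    and edvd: "(2 ^ t - 1) dvd (\<Sum>i<3. e i)"
    and j0: "j0 < t" "(\<Sum>i<3. bitn (e i) j0) \<ge> 2"
    and D: "D = Sigma {..<3} (\<lambda>i. {j\<in>{..<t}. bitn (2 ^ t - 1 - e i) j = 1})"
    and XD: "X \<subseteq> D"
    and sx: "0 < (\<Sum>p\<in>X. (2::nat) ^ snd p)" "(2 ^ t - 1) dvd (\<Sum>p\<in>X. (2::nat) ^ snd p)"
    and sy: "0 < (\<Sum>p\<in>D - X. (2::nat) ^ snd p)" "(2 ^ t - 1) dvd (\<Sum>p\<in>D - X. (2::nat) ^ snd p)"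
  shows False
proof -
  define Y where "Y = D - X"
  define Xc where "Xc j = card {p\<in>X. snd p = j}" for j
  define Yc where "Yc j = card {p\<in>Y. snd p = j}" for j
  define E where "E j = (\<Sum>i<3. bitn (e i) j)" for j
  have fD: "finite D" using D by auto
  have fX: "finite X" using fD XD finite_subset by auto
  have fY: "finite Y" using fD Y_def by auto
  have sD: "snd ` D \<subseteq> {..<t}" using D by auto
  have sX: "(\<Sum>p\<in>X. (2::nat) ^ snd p) = (\<Sum>j<t. Xc j * 2 ^ j)"
    unfolding Xc_def by (rule sigma_levels[OF fX]) (use sD XD in auto)
  have sY: "(\<Sum>p\<in>Y. (2::nat) ^ snd p) = (\<Sum>j<t. Yc j * 2 ^ j)"
    unfolding Yc_def by (rule sigma_levels[OF fY]) (use sD Y_def in auto)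
  have lev: "Xc j + Yc j + E j = 3" if "j < t" for j
  proof -
    have "{p\<in>X. snd p = j} \<union> {p\<in>Y. snd p = j} = {p\<in>D. snd p = j}" using XD Y_def by auto
    moreover have "{p\<in>X. snd p = j} \<inter> {p\<in>Y. snd p = j} = {}" using Y_def by auto
    ultimately have c1: "Xc j + Yc j = card {p\<in>D. snd p = j}"
      unfolding Xc_def Yc_def
    proof -
      assume u: "{p\<in>X. snd p = j} \<union> {p\<in>Y. snd p = j} = {p\<in>D. snd p = j}"
        and i: "{p\<in>X. snd p = j} \<inter> {p\<in>Y. snd p = j} = {}"
      have "card ({p\<in>X. snd p = j} \<union> {p\<in>Y. snd p = j}) = card {p\<in>X. snd p = j} + card {p\<in>Y. snd p = j}"
        by (rule card_Un_disjoint) (use fX fY i in auto)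
      then show "card {p\<in>X. snd p = j} + card {p\<in>Y. snd p = j} = card {p\<in>D. snd p = j}" using u by simp
    qed
    have "{p\<in>D. snd p = j} = (\<lambda>i. (i, j)) ` {i\<in>{..<3}. bitn (2 ^ t - 1 - e i) j = 1}"
      using D that by auto
    then have "card {p\<in>D. snd p = j} = card {i\<in>{..<3::nat}. bitn (2 ^ t - 1 - e i) j = 1}"
      by (simp add: card_image inj_on_def)
    also have "\<dots> = (\<Sum>i<3. bitn (2 ^ t - 1 - e i) j)"
      unfolding card_filter_sum
      by (intro sum.cong refl) (rule bitn_if)
    finally have c2: "Xc j + Yc j = (\<Sum>i<3. bitn (2 ^ t - 1 - e i) j)" using c1 by simp
    have "(\<Sum>i<3. bitn (2 ^ t - 1 - e i) j) + E j = (\<Sum>i<3::nat. 1)"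
      unfolding E_def sum.distrib[symmetric]
    proof (intro sum.cong refl)
      fix i assume "i \<in> {..<3::nat}"
      then have "(2 ^ t - 1 - e i) + e i = 2 ^ t - 1" using ebd by auto
      then show "bitn (2 ^ t - 1 - e i) j + bitn (e i) j = 1" using compl_bits[rule_format, where t=t and d="2 ^ t - 1 - e i" and e="e i" and j=j] that by blast
    qed
    then show ?thesis using c2 by simp
  qed
  have esum: "(\<Sum>i<3. e i) = (\<Sum>j<t. E j * 2 ^ j)"
  proof -
    have "(\<Sum>i<3. e i) = (\<Sum>i<3::nat. \<Sum>j<t. bitn (e i) j * 2 ^ j)"
    proof (intro sum.cong refl)
      fix i assume "i \<in> {..<3::nat}"
      moreover have "(0::nat) < 2 ^ t" by simp
      ultimately have "e i < 2 ^ t" using ebd by (metis lessThan_iff One_nat_def diff_Suc_less le_less_trans)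
      then show "e i = (\<Sum>j<t. bitn (e i) j * 2 ^ j)" by (rule bin_exp')
    qed
    also have "\<dots> = (\<Sum>j<t. E j * 2 ^ j)"
      unfolding E_def by (subst sum.swap) (simp add: sum_distrib_right)
    finally show ?thesis .
  qed
  have tot: "(\<Sum>j<t. Xc j * 2 ^ j) + (\<Sum>j<t. Yc j * 2 ^ j) + (\<Sum>i<3. e i) = 3 * (2 ^ t - 1)"
  proof -
    have "(\<Sum>j<t. Xc j * 2 ^ j) + (\<Sum>j<t. Yc j * 2 ^ j) + (\<Sum>j<t. E j * 2 ^ j)
        = (\<Sum>j<t. (Xc j + Yc j + E j) * 2 ^ j)"
      by (simp add: sum.distrib algebra_simps)
    also have "\<dots> = (\<Sum>j<t. 3 * 2 ^ j)" by (intro sum.cong refl) (simp add: lev)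
    also have "\<dots> = 3 * (2 ^ t - 1)" by (simp add: sum_distrib_left[symmetric] sum_pow2)
    finally show ?thesis using esum by simp
  qed
  have epos: "0 < (\<Sum>i<3. e i)"
  proof (rule ccontr)
    assume "\<not> ?thesis"
    then have "\<forall>i<3. e i = 0" by simp
    then have "E j0 = 0" unfolding E_def by simp
    then show False using j0 E_def by simp
  qed
  have g1: "(\<Sum>j<t. Xc j * 2 ^ j) \<ge> 2 ^ t - 1" using dvd_imp_le[OF sx(2) sx(1)] sX by simp
  have g2: "(\<Sum>j<t. Yc j * 2 ^ j) \<ge> 2 ^ t - 1" using dvd_imp_le[OF sy(2) sy(1)] sY Y_def by simp
  have g3: "(\<Sum>i<3. e i) \<ge> 2 ^ t - 1" using dvd_imp_le[OF edvd epos] .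
  have ex: "(\<Sum>j<t. Xc j * 2 ^ j) = 2 ^ t - 1" and ey: "(\<Sum>j<t. Yc j * 2 ^ j) = 2 ^ t - 1"
    using g1 g2 g3 tot by linarith+
  have "\<forall>j<t. Xc j + Yc j \<le> 3" 
  proof (intro allI impI)
    fix j assume "j < t" from lev[OF this] show "Xc j + Yc j \<le> 3" by arith
  qed
  then have "\<forall>j<t. Xc j = 1 \<and> Yc j = 1"
    using mp[OF mp[OF mp[OF spec[OF spec[OF parity_lemma[of t]], of Xc Yc]]]] ex ey by blast
  then have "Xc j0 = 1 \<and> Yc j0 = 1" using j0 by blast
  then have "E j0 = 1" using lev[OF j0(1)] by simp
  then show False using j0 E_def by simp
qed




lemma pow_bits:
  fixes x :: "'a::comm_monoid_mult"
  assumes "n < 2 ^ t"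
  shows "x ^ n = (\<Prod>j\<in>{j\<in>{..<t}. bitn n j = 1}. x ^ (2 ^ j))"
proof -
  have "(\<Sum>j\<in>{j\<in>{..<t}. bitn n j = 1}. (2::nat) ^ j) = (\<Sum>j<t. if bitn n j = 1 then 2 ^ j else 0)"
    by (rule sum.inter_filter) simp
  also have "\<dots> = (\<Sum>j<t. bitn n j * 2 ^ j)"
    by (intro sum.cong refl) (use bitn_01 in force)
  also have "\<dots> = n" using bin_exp'[OF assms] by simp
  finally have "n = (\<Sum>j\<in>{j\<in>{..<t}. bitn n j = 1}. (2::nat) ^ j)" by simp
  then have "x ^ n = x ^ (\<Sum>j\<in>{j\<in>{..<t}. bitn n j = 1}. (2::nat) ^ j)" by simp
  then show ?thesis by (simp add: power_sum)
qed

lemma sum_sep: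
  fixes c :: "'a::comm_semiring_1"
  shows "(\<Sum>a\<in>A. \<Sum>b\<in>B. c * (f a * g b)) = c * ((\<Sum>a\<in>A. f a) * (\<Sum>b\<in>B. g b))"
proof -
  have "c * ((\<Sum>a\<in>A. f a) * (\<Sum>b\<in>B. g b)) = c * (\<Sum>a\<in>A. \<Sum>b\<in>B. f a * g b)"
    by (simp only: sum_product)
  also have "\<dots> = (\<Sum>a\<in>A. c * (\<Sum>b\<in>B. f a * g b))" by (rule sum_distrib_left)
  also have "\<dots> = (\<Sum>a\<in>A. \<Sum>b\<in>B. c * (f a * g b))" by (simp only: sum_distrib_left)
  finally show ?thesis by (rule sym)
qed

lemma line_sum:
  fixes e :: "nat \<Rightarrow> nat" and u w :: "nat \<Rightarrow> 'k::{field,finite}"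
  assumes q: "CARD('k) = 2 ^ t"
    and ebd: "\<forall>i<3. e i \<le> 2 ^ t - 1"
    and edvd: "(2 ^ t - 1) dvd (\<Sum>i<3. e i)"
    and j0: "j0 < t" "(\<Sum>i<3. bitn (e i) j0) \<ge> 2"
  shows "(\<Sum>a\<in>UNIV. \<Sum>b\<in>UNIV. \<Prod>i<3. (a * u i + b * w i) ^ (2 ^ t - 1 - e i)) = 0"
proof -
  define J where "J i = {j\<in>{..<t}. bitn (2 ^ t - 1 - e i) j = 1}" for i
  define D where "D = Sigma {..<3} J"
  have two: "(2::'k) = 0" using char2(1)[OF q] .
  define F where "F a p = (a * u (fst p)) ^ (2 ^ snd p)" for a :: 'k and p :: "nat \<times> nat"
  define G where "G b p = (b * w (fst p)) ^ (2 ^ snd p)" for b :: 'k and p :: "nat \<times> nat"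
  define sig where "sig X = (\<Sum>p\<in>X. (2::nat) ^ snd p)" for X :: "(nat \<times> nat) set"
  define U where "U X = (\<Prod>p\<in>X. u (fst p) ^ (2 ^ snd p))" for X :: "(nat \<times> nat) set"
  define W where "W X = (\<Prod>p\<in>X. w (fst p) ^ (2 ^ snd p))" for X :: "(nat \<times> nat) set"
  have fD: "finite D" unfolding D_def J_def by auto
  have step1: "(\<Prod>i<3. (a * u i + b * w i) ^ (2 ^ t - 1 - e i)) = (\<Prod>p\<in>D. F a p + G b p)" for a b
  proof -
    have "(\<Prod>i<3. (a * u i + b * w i) ^ (2 ^ t - 1 - e i)) = (\<Prod>i<3. \<Prod>j\<in>J i. (a * u i + b * w i) ^ (2 ^ j))"
    proof (intro prod.cong refl)
      fix i :: nat
      have "2 ^ t - 1 - e i < (2::nat) ^ t" by (simp add: less_imp_diff_less)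
      then show "(a * u i + b * w i) ^ (2 ^ t - 1 - e i) = (\<Prod>j\<in>J i. (a * u i + b * w i) ^ (2 ^ j))"
        unfolding J_def by (rule pow_bits)
    qed
    also have "\<dots> = (\<Prod>i<3. \<Prod>j\<in>J i. F a (i, j) + G b (i, j))"
      by (intro prod.cong refl) (simp add: F_def G_def frob[OF two])
    also have "\<dots> = (\<Prod>p\<in>D. F a p + G b p)"
      unfolding D_def by (subst prod.Sigma) (auto simp: J_def split_def)
    finally show ?thesis .
  qed
  have FX: "(\<Prod>p\<in>X. F a p) = a ^ sig X * U X" for a X
    by (simp add: F_def sig_def U_def power_mult_distrib prod.distrib power_sum)
  have GX: "(\<Prod>p\<in>X. G b p) = b ^ sig X * W X" for b X
    by (simp add: G_def sig_def W_def power_mult_distrib prod.distrib power_sum)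
  have step2: "(\<Prod>p\<in>D. F a p + G b p) = (\<Sum>X\<in>Pow D. (U X * W (D - X)) * (a ^ sig X * b ^ sig (D - X)))" for a b
    by (simp add: prod_add[OF fD] FX GX algebra_simps)
  have "(\<Sum>a\<in>UNIV. \<Sum>b\<in>UNIV. \<Prod>i<3. (a * u i + b * w i) ^ (2 ^ t - 1 - e i))
      = (\<Sum>a\<in>(UNIV::'k set). \<Sum>b\<in>UNIV. \<Sum>X\<in>Pow D. (U X * W (D - X)) * (a ^ sig X * b ^ sig (D - X)))"
    by (simp only: step1 step2)
  also have "\<dots> = (\<Sum>a\<in>(UNIV::'k set). \<Sum>X\<in>Pow D. \<Sum>b\<in>UNIV. (U X * W (D - X)) * (a ^ sig X * b ^ sig (D - X)))"
    by (rule sum.cong[OF refl], rule sum.swap)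
  also have "\<dots> = (\<Sum>X\<in>Pow D. \<Sum>a\<in>(UNIV::'k set). \<Sum>b\<in>UNIV. (U X * W (D - X)) * (a ^ sig X * b ^ sig (D - X)))"
    by (rule sum.swap)
  also have "\<dots> = (\<Sum>X\<in>Pow D. (U X * W (D - X)) * ((\<Sum>a\<in>(UNIV::'k set). a ^ sig X) * (\<Sum>b\<in>(UNIV::'k set). b ^ sig (D - X))))"
    by (intro sum.cong refl) (rule sum_sep)
  also have "\<dots> = 0"
  proof (intro sum.neutral ballI)
    fix X assume XD: "X \<in> Pow D"
    have "(\<Sum>a\<in>(UNIV::'k set). a ^ sig X) * (\<Sum>b\<in>(UNIV::'k set). b ^ sig (D - X)) = 0"
    proof (rule ccontr)
      assume nz: "\<not> ?thesis"
      then have "(\<Sum>a\<in>(UNIV::'k set). a ^ sig X) \<noteq> 0" "(\<Sum>b\<in>(UNIV::'k set). b ^ sig (D - X)) \<noteq> 0" by auto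
      then have c: "0 < sig X \<and> (2 ^ t - 1) dvd sig X" "0 < sig (D - X) \<and> (2 ^ t - 1) dvd sig (D - X)"
        unfolding powsum[OF q] q by (auto split: if_splits)
      show False
        by (rule comb[OF ebd edvd j0, of D X]) (use XD c in \<open>auto simp: D_def J_def sig_def\<close>)
    qed
    then show "(U X * W (D - X)) * ((\<Sum>a\<in>(UNIV::'k set). a ^ sig X) * (\<Sum>b\<in>(UNIV::'k set). b ^ sig (D - X))) = 0"
      by simp
  qed
  finally show ?thesis .
qed




lemma prod4: "(\<Prod>i<(4::nat). f i) = f 0 * f 1 * f 2 * (f 3 :: 'a::comm_monoid_mult)"
  by (simp add: numeral_eq_Suc lessThan_Suc mult_ac)
lemma prod3: "(\<Prod>i<(3::nat). f i) = f 0 * f 1 * (f 2 :: 'a::comm_monoid_mult)"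
  by (simp add: numeral_eq_Suc lessThan_Suc mult_ac)
lemma sum4: "(\<Sum>i<(4::nat). f i) = f 0 + f 1 + f 2 + (f 3 :: 'a::comm_monoid_add)"
  by (simp add: numeral_eq_Suc lessThan_Suc add_ac)
lemma sum3: "(\<Sum>i<(3::nat). f i) = f 0 + f 1 + (f 2 :: 'a::comm_monoid_add)"
  by (simp add: numeral_eq_Suc lessThan_Suc add_ac)

definition vec4 :: "'k \<Rightarrow> 'k \<Rightarrow> 'k \<Rightarrow> 'k \<Rightarrow> nat \<Rightarrow> 'k::field" where
  "vec4 a b c d = (\<lambda>i. if i = 0 then a else if i = 1 then b else if i = 2 then c else if i = 3 then d else 0)"

lemma vec4_app[simp]: "vec4 a b c d 0 = a" "vec4 a b c d 1 = b" "vec4 a b c d 2 = c" "vec4 a b c d 3 = d"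
  "vec4 a b c d (Suc 0) = b"
  by (simp_all add: vec4_def)

lemma Vec_param: "Vec = (\<lambda>(a, b, c, d). vec4 a b c d) ` UNIV"
proof (rule set_eqI, rule iffI)
  fix v :: "nat \<Rightarrow> 'k::field" assume "v \<in> Vec"
  then have "v = vec4 (v 0) (v 1) (v 2) (v 3)"
    unfolding vec4_def Vec_def by (auto simp: fun_eq_iff)
  then show "v \<in> (\<lambda>(a, b, c, d). vec4 a b c d) ` UNIV"
    by (intro image_eqI[where x="(v 0, v 1, v 2, v 3)"]) auto
next
  fix v :: "nat \<Rightarrow> 'k::field" assume "v \<in> (\<lambda>(a, b, c, d). vec4 a b c d) ` UNIV"
  then show "v \<in> Vec" by (auto simp: Vec_def vec4_def)
qed

lemma vec4_inj: "inj (\<lambda>(a, b, c, d). vec4 a b c (d :: 'k::field))"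
proof (rule injI)
  fix x y :: "'k \<times> 'k \<times> 'k \<times> 'k"
  assume h: "(\<lambda>(a, b, c, d). vec4 a b c d) x = (\<lambda>(a, b, c, d). vec4 a b c d) y"
  obtain a b c d where x: "x = (a, b, c, d)" by (cases x) auto
  obtain a' b' c' d' where y: "y = (a', b', c', d')" by (cases y) auto
  have "vec4 a b c d = vec4 a' b' c' d'" using h x y by simp
  then have "vec4 a b c d 0 = vec4 a' b' c' d' 0" "vec4 a b c d 1 = vec4 a' b' c' d' 1"
    "vec4 a b c d 2 = vec4 a' b' c' d' 2" "vec4 a b c d 3 = vec4 a' b' c' d' 3" by simp_all
  then show "x = y" using x y by simp
qed

lemma finite_Vec: "finite (Vec :: (nat \<Rightarrow> 'k::{field,finite}) set)"
  unfolding Vec_param by simp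

lemma sum_pair: "(\<Sum>x\<in>(UNIV::('a::finite \<times> 'b::finite) set). g x) = (\<Sum>a\<in>UNIV. \<Sum>b\<in>UNIV. g (a, b))"
  by (simp add: sum.cartesian_product)

lemma sum_Vec:
  fixes F :: "(nat \<Rightarrow> 'k::{field,finite}) \<Rightarrow> 'r::comm_monoid_add"
  shows "(\<Sum>v\<in>Vec. F v) = (\<Sum>a\<in>UNIV. \<Sum>b\<in>UNIV. \<Sum>c\<in>UNIV. \<Sum>d\<in>UNIV. F (vec4 a b c d))"
proof -
  have "(\<Sum>v\<in>Vec. F v) = (\<Sum>x\<in>UNIV. F ((\<lambda>(a, b, c, d). vec4 a b c d) x))"
    unfolding Vec_param by (subst sum.reindex[OF vec4_inj]) (simp add: comp_def)
  also have "\<dots> = (\<Sum>a\<in>UNIV. \<Sum>b\<in>UNIV. \<Sum>c\<in>UNIV. \<Sum>d\<in>UNIV. F (vec4 a b c d))"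
    by (simp add: sum_pair)
  finally show ?thesis .
qed

lemma sum4_sep:
  fixes f0 f1 f2 f3 :: "'a \<Rightarrow> 'r::comm_semiring_1"
  shows "(\<Sum>a\<in>A. \<Sum>b\<in>B. \<Sum>c\<in>C. \<Sum>d\<in>D. f0 a * f1 b * f2 c * f3 d)
     = sum f0 A * sum f1 B * sum f2 C * sum f3 D"
  by (simp only: sum_distrib_left[symmetric] sum_distrib_right[symmetric])

lemma finite_exps: "finite (exps q)"
proof -
  have "exps q \<subseteq> {f. \<forall>x. (x \<in> {..<4::nat} \<longrightarrow> f x \<in> {..q - 1}) \<and> (x \<notin> {..<4} \<longrightarrow> f x = 0)}"
    unfolding exps_def by auto
  then show ?thesis by (rule finite_subset) (intro finite_set_of_finite_funs; simp)
qed

lemma arith_raise: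
  fixes b e Q :: nat
  assumes "b \<le> Q" "e \<le> Q" "0 < b + (Q - e)" "Q dvd (b + (Q - e))"
  shows "b = e \<or> (e = 0 \<and> b = Q)"
proof -
  obtain k where k: "b + (Q - e) = Q * k" using assms(4) by auto
  have Q0: "Q > 0" using assms by auto
  have "Q * k \<le> Q * 2" using k assms(1,2) by linarith
  then have "k \<le> 2" using Q0 by simp
  moreover have "k > 0" using k assms(3) by (cases k) auto
  ultimately have "k = 1 \<or> k = 2" by auto
  then show ?thesis using k assms(1,2) by auto
qed




lemma ifmul: "(if c then x else 0) * (y::'a::semiring_0) = (if c then x * y else 0)" by simp

lemma peval_pmul:
  fixes p1 p2 :: "(nat \<Rightarrow> nat) \<Rightarrow> 'k::field"
  assumes cl: "\<forall>a\<in>exps q. \<forall>b\<in>exps q. p1 a \<noteq> 0 \<longrightarrow> p2 b \<noteq> 0 \<longrightarrow> (\<lambda>i. a i + b i) \<in> exps q"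
  shows "peval q (pmul q p1 p2) v = peval q p1 v * peval q p2 v"
proof -
  define M where "M e = (\<Prod>i<4. v i ^ e i)" for e :: "nat \<Rightarrow> nat"
  have fE: "finite (exps q)" by (rule finite_exps)
  have "peval q (pmul q p1 p2) v
      = (\<Sum>\<epsilon>\<in>exps q. \<Sum>a\<in>exps q. \<Sum>b\<in>exps q. (if (\<lambda>i. a i + b i) = \<epsilon> then p1 a * p2 b * M \<epsilon> else 0))"
    unfolding peval_def pmul_def M_def
    by (intro sum.cong refl) (simp add: sum_distrib_right ifmul)
  also have "\<dots> = (\<Sum>a\<in>exps q. \<Sum>b\<in>exps q. \<Sum>\<epsilon>\<in>exps q. (if (\<lambda>i. a i + b i) = \<epsilon> then p1 a * p2 b * M \<epsilon> else 0))"
    by (subst sum.swap, rule sum.cong[OF refl], rule sum.swap)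
  also have "\<dots> = (\<Sum>a\<in>exps q. \<Sum>b\<in>exps q. (if (\<lambda>i. a i + b i) \<in> exps q then p1 a * p2 b * M (\<lambda>i. a i + b i) else 0))"
    by (intro sum.cong refl) (rule sum.delta'[OF fE])
  also have "\<dots> = (\<Sum>a\<in>exps q. \<Sum>b\<in>exps q. (p1 a * M a) * (p2 b * M b))"
  proof (intro sum.cong refl)
    fix a b assume ab: "a \<in> exps q" "b \<in> exps q"
    show "(if (\<lambda>i. a i + b i) \<in> exps q then p1 a * p2 b * M (\<lambda>i. a i + b i) else 0) = (p1 a * M a) * (p2 b * M b)"
    proof (cases "p1 a \<noteq> 0 \<and> p2 b \<noteq> 0")
      case True
      then have "(\<lambda>i. a i + b i) \<in> exps q" using cl ab by auto
      moreover have "M (\<lambda>i. a i + b i) = M a * M b" unfolding M_def by (simp add: power_add prod.distrib)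
      ultimately show ?thesis by (simp add: mult_ac)
    next
      case False
      then show ?thesis by auto
    qed
  qed
  also have "\<dots> = peval q p1 v * peval q p2 v"
    unfolding peval_def M_def by (simp add: sum_product mult_ac)
  finally show ?thesis .
qed

lemma peval_opx3:
  assumes "q \<ge> 2"
  shows "peval q (one_plus_x3 q) v = 1 + v 3 ^ (q - 1)"
proof -
  define E3 where "E3 = (\<lambda>i::nat. if i = 3 then q - 1 else (0::nat))"
  define M where "M e = (\<Prod>i<4. v i ^ e i)" for e :: "nat \<Rightarrow> nat"
  have fE: "finite (exps q)" by (rule finite_exps)
  have z: "(\<lambda>i. 0::nat) \<in> exps q" by (simp add: exps_def)
  have e3: "E3 \<in> exps q" by (simp add: exps_def E3_def)
  have "peval q (one_plus_x3 q) v = (\<Sum>e\<in>exps q. (if e = (\<lambda>i. 0) then M e else 0) + (if e = E3 then M e else 0))"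
    unfolding peval_def one_plus_x3_def M_def E3_def by (intro sum.cong refl) (simp add: distrib_right)
  also have "\<dots> = M (\<lambda>i. 0) + M E3"
    by (simp add: sum.distrib sum.delta[OF fE] z e3)
  also have "\<dots> = 1 + v 3 ^ (q - 1)"
    unfolding M_def E3_def by (simp add: prod4)
  finally show ?thesis .
qed

lemma peval_h:
  fixes h :: "(nat \<Rightarrow> nat) \<Rightarrow> 'k::field"
  assumes "\<forall>e. h e \<noteq> 0 \<longrightarrow> e 3 = 0"
  shows "peval q h v = (\<Sum>b\<in>exps q. h b * (v 0 ^ b 0 * v 1 ^ b 1 * v 2 ^ b 2))"
  unfolding peval_def
proof (intro sum.cong refl)
  fix b assume "b \<in> exps q"
  show "h b * (\<Prod>i<4. v i ^ b i) = h b * (v 0 ^ b 0 * v 1 ^ b 1 * v 2 ^ b 2)"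
    using assms by (cases "h b = 0") (auto simp: prod4)
qed





lemma lines_sub_Vec:
  assumes "S \<in> (Lines :: (nat \<Rightarrow> 'k::field) set set)"
  shows "S \<subseteq> Vec"
  using assms unfolding Lines_def is_line_def Vec_def by auto

lemma finite_Lines: "finite (Lines :: (nat \<Rightarrow> 'k::{field,finite}) set set)"
proof -
  have "Lines \<subseteq> Pow (Vec :: (nat \<Rightarrow> 'k) set)" using lines_sub_Vec by blast
  then show ?thesis using finite_Vec by (meson finite_Pow_iff finite_subset)
qed

lemma line_sum_param:
  fixes G :: "(nat \<Rightarrow> 'k::{field,finite}) \<Rightarrow> 'k"
  assumes "S \<in> Lines"
  shows "\<exists>u w. (\<Sum>v\<in>S. G v) = (\<Sum>a\<in>UNIV. \<Sum>b\<in>UNIV. G (\<lambda>i. a * u i + b * w i))"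
proof -
  obtain u w where ind: "\<forall>a b. (\<lambda>i. a * u i + b * w i) = (\<lambda>i. 0) \<longrightarrow> a = 0 \<and> b = 0"
    and S: "S = {x. \<exists>a b. x = (\<lambda>i. a * u i + b * w i)}"
    using assms unfolding Lines_def is_line_def by auto
  define L where "L = (\<lambda>(a, b). (\<lambda>i. a * u i + b * w i))"
  have SL: "S = L ` UNIV"
  proof (rule set_eqI, rule iffI)
    fix x assume "x \<in> S"
    then obtain a b where "x = (\<lambda>i. a * u i + b * w i)" using S by blast
    then have "x = L (a, b)" by (simp add: L_def)
    then show "x \<in> L ` UNIV" by blast
  next
    fix x assume "x \<in> L ` UNIV"
    then obtain p where "x = L p" by blast
    then show "x \<in> S" unfolding S L_def by (cases p) auto
  qed
  have inj: "inj L"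
  proof (rule injI)
    fix x y assume h: "L x = L y"
    obtain a b where x: "x = (a, b)" by (cases x)
    obtain a' b' where y: "y = (a', b')" by (cases y)
    have "(\<lambda>i. (a - a') * u i + (b - b') * w i) = (\<lambda>i. 0)"
    proof
      fix i
      have "(\<lambda>i. a * u i + b * w i) = (\<lambda>i. a' * u i + b' * w i)" using h x y by (simp add: L_def)
      from fun_cong[OF this, of i] have "a * u i + b * w i = a' * u i + b' * w i" by simp
      then show "(a - a') * u i + (b - b') * w i = 0" by (simp add: algebra_simps)
    qed
    then have "a - a' = 0 \<and> b - b' = 0" using ind by blast
    then show "x = y" using x y by simp
  qed
  have "(\<Sum>v\<in>S. G v) = (\<Sum>p\<in>UNIV. G (L p))"
    unfolding SL by (subst sum.reindex[OF inj]) simp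
  also have "\<dots> = (\<Sum>a\<in>UNIV. \<Sum>b\<in>UNIV. G (\<lambda>i. a * u i + b * w i))"
    by (simp add: sum_pair L_def)
  finally show ?thesis by blast
qed



theorem lemma10:
  fixes t :: nat
    and rs h :: "(nat \<Rightarrow> nat) \<Rightarrow> 'k::{field,finite}"
  assumes q: "CARD('k) = 2 ^ t"
    and rs_RP: "in_RPstar CARD('k) rs"
    and code: "in_code (peval CARD('k) rs)"
    and ker: "\<forall>v\<in>Vec. v 3 \<noteq> 0 \<longrightarrow> peval CARD('k) rs v = 0"
    and h_RP: "in_RPstar CARD('k) h"
    and h_no_x3: "\<forall>e. h e \<noteq> 0 \<longrightarrow> e 3 = 0"
    and fact: "rs = pmul CARD('k) (one_plus_x3 CARD('k)) h"
  shows "\<forall>e. h e \<noteq> 0 \<longrightarrow> e \<noteq> (\<lambda>i. 0) \<longrightarrow> (\<forall>j<t. digit_deg e j = 1)"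
proof -
  define Q :: nat where "Q = 2 ^ t - 1"
  have two: "(2::'k) = 0" and tpos: "t > 0" using char2[OF q] by auto
  have "(2::nat) ^ 1 \<le> 2 ^ t" using tpos by (intro power_increasing) auto
  then have Q0: "Q > 0" unfolding Q_def by simp
  have CQ: "CARD('k) - 1 = Q" using q Q_def by simp
  have C2: "CARD('k) \<ge> 2" using q \<open>(2::nat) ^ 1 \<le> 2 ^ t\<close> by simp
  have hE: "\<And>e. h e \<noteq> 0 \<Longrightarrow> e \<in> exps CARD('k)" using h_RP unfolding in_RPstar_def in_Rstar_def by blast
  have hD: "\<And>e. h e \<noteq> 0 \<Longrightarrow> Q dvd (\<Sum>i<4. e i)" using h_RP CQ unfolding in_RPstar_def by auto
  have rs_eval: "peval CARD('k) rs v = (1 + v 3 ^ Q) * peval CARD('k) h v" for v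
  proof -
    have cl: "\<forall>a\<in>exps CARD('k). \<forall>b\<in>exps CARD('k). one_plus_x3 CARD('k) a \<noteq> (0::'k) \<longrightarrow> h b \<noteq> 0
              \<longrightarrow> (\<lambda>i. a i + b i) \<in> exps CARD('k)"
    proof (intro ballI impI)
      fix a b assume a: "a \<in> exps CARD('k)" and b: "b \<in> exps CARD('k)"
        and pa: "one_plus_x3 CARD('k) a \<noteq> (0::'k)" and hb: "h b \<noteq> 0"
      have "a = (\<lambda>i. 0) \<or> a = (\<lambda>i. if i = 3 then CARD('k) - 1 else 0)"
        using pa unfolding one_plus_x3_def by (auto split: if_splits)
      moreover have "b 3 = 0" using h_no_x3 hb by auto
      ultimately show "(\<lambda>i. a i + b i) \<in> exps CARD('k)" using b unfolding exps_def by auto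
    qed
    show ?thesis unfolding fact peval_pmul[OF cl] peval_opx3[OF C2] CQ ..
  qed
  have main: "h e \<noteq> 0 \<Longrightarrow> \<not> (\<exists>j0<t. 2 \<le> digit_deg e j0)" for e
  proof (induction e rule: measure_induct_rule[where f="\<lambda>e. card {i. i < 3 \<and> e i = 0}"])
    case (less e)
    show ?case
    proof
      assume "\<exists>j0<t. 2 \<le> digit_deg e j0"
      then obtain j0 where j0: "j0 < t" "2 \<le> digit_deg e j0" by blast
      have eE: "e \<in> exps CARD('k)" using hE less.prems .
      have e3: "e 3 = 0" using h_no_x3 less.prems by auto
      have ebd: "\<forall>i<3. e i \<le> 2 ^ t - 1" using eE CQ Q_def unfolding exps_def by auto
      have ebdQ: "\<And>i. i < 3 \<Longrightarrow> e i \<le> Q" using ebd Q_def by auto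
      have edvd: "(2 ^ t - 1) dvd (\<Sum>i<3. e i)" using hD[OF less.prems] e3 Q_def by (simp add: sum4 sum3)
      have dde: "digit_deg e j = (\<Sum>i<3. bitn (e i) j)" for j
        unfolding digit_deg_def bitn_def by (simp add: sum4 sum3 e3)
      have j0': "(\<Sum>i<3. bitn (e i) j0) \<ge> 2" using j0 dde by simp
      define G where "G v = (\<Prod>i<3. v i ^ (2 ^ t - 1 - e i))" for v :: "nat \<Rightarrow> 'k"
      define \<Phi> where "\<Phi> = (\<Sum>v\<in>Vec. peval CARD('k) rs v * G v)"
      obtain c where c: "\<forall>v\<in>Vec. peval CARD('k) rs v = (\<Sum>S\<in>Lines. c S * (if v \<in> S then 1 else 0))"
        using code unfolding in_code_def by blast
      have lz: "(\<Sum>v\<in>S. G v) = 0" if SL: "S \<in> Lines" for S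
      proof -
        obtain u w where "(\<Sum>v\<in>S. G v) = (\<Sum>a\<in>UNIV. \<Sum>b\<in>UNIV. G (\<lambda>i. a * u i + b * w i))"
          using line_sum_param[OF SL] by blast
        also have "\<dots> = (\<Sum>a\<in>UNIV. \<Sum>b\<in>UNIV. \<Prod>i<3. (a * u i + b * w i) ^ (2 ^ t - 1 - e i))"
          unfolding G_def ..
        also have "\<dots> = 0" by (rule line_sum[OF q ebd edvd j0(1) j0'])
        finally show ?thesis .
      qed
      have phi0: "\<Phi> = 0"
      proof -
        have "\<Phi> = (\<Sum>v\<in>Vec. \<Sum>S\<in>Lines. c S * (if v \<in> S then G v else 0))"
          unfolding \<Phi>_def using c by (intro sum.cong refl) (auto simp: sum_distrib_right intro!: sum.cong)
        also have "\<dots> = (\<Sum>S\<in>Lines. \<Sum>v\<in>Vec. c S * (if v \<in> S then G v else 0))"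
          by (rule sum.swap)
        also have "\<dots> = (\<Sum>S\<in>Lines. c S * (\<Sum>v\<in>S. G v))"
        proof (intro sum.cong refl)
          fix S :: "(nat \<Rightarrow> 'k) set" assume S: "S \<in> Lines"
          have "(\<Sum>v\<in>Vec. c S * (if v \<in> S then G v else 0)) = c S * (\<Sum>v\<in>Vec. if v \<in> S then G v else 0)"
            by (simp add: sum_distrib_left)
          also have "(\<Sum>v\<in>Vec. if v \<in> S then G v else 0) = (\<Sum>v\<in>{v\<in>Vec. v \<in> S}. G v)"
            by (rule sum.inter_filter[symmetric]) (rule finite_Vec)
          also have "{v\<in>Vec. v \<in> S} = S" using lines_sub_Vec[OF S] by auto
          finally show "(\<Sum>v\<in>Vec. c S * (if v \<in> S then G v else 0)) = c S * (\<Sum>v\<in>S. G v)" .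
        qed
        also have "\<dots> = 0" using lz by simp
        finally show ?thesis .
      qed
      define ps :: "nat \<Rightarrow> 'k" where "ps m = (if 0 < m \<and> Q dvd m then 1 else 0)" for m
      have PS: "(\<Sum>x\<in>(UNIV::'k set). x ^ m) = ps m" for m
        unfolding powsum[OF q] CQ ps_def ..
      have phi_h: "\<Phi> = (\<Sum>\<beta>\<in>exps CARD('k). h \<beta> * (ps (\<beta> 0 + (2 ^ t - 1 - e 0)) * ps (\<beta> 1 + (2 ^ t - 1 - e 1))
                          * ps (\<beta> 2 + (2 ^ t - 1 - e 2))))"
      proof -
        define K where "K \<beta> v = v 0 ^ (\<beta> 0 + (2 ^ t - 1 - e 0)) * v 1 ^ (\<beta> 1 + (2 ^ t - 1 - e 1))
                          * v 2 ^ (\<beta> 2 + (2 ^ t - 1 - e 2)) * (1 + v 3 ^ Q)" for \<beta> :: "nat \<Rightarrow> nat" and v :: "nat \<Rightarrow> 'k"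
        have "\<Phi> = (\<Sum>v\<in>Vec. \<Sum>\<beta>\<in>exps CARD('k). h \<beta> * K \<beta> v)"
          unfolding \<Phi>_def
        proof (intro sum.cong refl)
          fix v :: "nat \<Rightarrow> 'k"
          have "peval CARD('k) rs v * G v = (1 + v 3 ^ Q) * (\<Sum>b\<in>exps CARD('k). h b * (v 0 ^ b 0 * v 1 ^ b 1 * v 2 ^ b 2)) * G v"
            unfolding rs_eval peval_h[OF h_no_x3] ..
          also have "\<dots> = (\<Sum>b\<in>exps CARD('k). (1 + v 3 ^ Q) * (h b * (v 0 ^ b 0 * v 1 ^ b 1 * v 2 ^ b 2)) * G v)"
            by (simp add: sum_distrib_left sum_distrib_right)
          also have "\<dots> = (\<Sum>\<beta>\<in>exps CARD('k). h \<beta> * K \<beta> v)"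
            by (intro sum.cong refl) (simp add: K_def G_def prod3 power_add mult_ac)
          finally show "peval CARD('k) rs v * G v = (\<Sum>\<beta>\<in>exps CARD('k). h \<beta> * K \<beta> v)" .
        qed
        also have "\<dots> = (\<Sum>\<beta>\<in>exps CARD('k). h \<beta> * (\<Sum>v\<in>Vec. K \<beta> v))"
          by (subst sum.swap) (simp add: sum_distrib_left)
        also have "\<dots> = (\<Sum>\<beta>\<in>exps CARD('k). h \<beta> * (ps (\<beta> 0 + (2 ^ t - 1 - e 0)) * ps (\<beta> 1 + (2 ^ t - 1 - e 1))
                          * ps (\<beta> 2 + (2 ^ t - 1 - e 2))))"
        proof (intro sum.cong refl arg_cong2[where f="(*)"])
          fix \<beta> :: "nat \<Rightarrow> nat"
          have "(\<Sum>v\<in>Vec. K \<beta> v) = (\<Sum>a\<in>UNIV. \<Sum>b\<in>UNIV. \<Sum>c\<in>UNIV. \<Sum>d\<in>UNIV. K \<beta> (vec4 a b c d))"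
            by (rule sum_Vec)
          also have "\<dots> = (\<Sum>a\<in>(UNIV::'k set). \<Sum>b\<in>(UNIV::'k set). \<Sum>c\<in>(UNIV::'k set). \<Sum>d\<in>(UNIV::'k set).
               a ^ (\<beta> 0 + (2 ^ t - 1 - e 0)) * b ^ (\<beta> 1 + (2 ^ t - 1 - e 1)) * c ^ (\<beta> 2 + (2 ^ t - 1 - e 2)) * (1 + d ^ Q))"
            by (simp add: K_def)
          also have "\<dots> = ps (\<beta> 0 + (2 ^ t - 1 - e 0)) * ps (\<beta> 1 + (2 ^ t - 1 - e 1)) * ps (\<beta> 2 + (2 ^ t - 1 - e 2))
                 * (\<Sum>d\<in>(UNIV::'k set). 1 + d ^ Q)"
            by (simp only: sum4_sep PS)
          also have "(\<Sum>d\<in>(UNIV::'k set). 1 + d ^ Q) = 1"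
          proof -
            have "(\<Sum>d\<in>(UNIV::'k set). 1 + d ^ Q) = (\<Sum>d\<in>(UNIV::'k set). d ^ 0) + (\<Sum>d\<in>(UNIV::'k set). d ^ Q)"
              by (simp add: sum.distrib)
            also have "\<dots> = 1" unfolding PS ps_def using Q0 by simp
            finally show ?thesis .
          qed
          finally show "(\<Sum>v\<in>Vec. K \<beta> v) = ps (\<beta> 0 + (2 ^ t - 1 - e 0)) * ps (\<beta> 1 + (2 ^ t - 1 - e 1))
                          * ps (\<beta> 2 + (2 ^ t - 1 - e 2))" by simp
        qed
        finally show ?thesis .
      qed
      have dde2: "digit_deg e j0 \<le> digit_deg \<beta> j0" if r4: "\<forall>i. \<beta> i = e i \<or> e i = 0" for \<beta> :: "nat \<Rightarrow> nat"
        unfolding digit_deg_def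
      proof (rule sum_mono)
        fix i
        show "e i div 2 ^ j0 mod 2 \<le> \<beta> i div 2 ^ j0 mod 2" using r4[rule_format, of i] by auto
      qed
      have phi1: "\<Phi> = h e"
      proof -
        have "(\<Sum>\<beta>\<in>exps CARD('k). h \<beta> * (ps (\<beta> 0 + (2 ^ t - 1 - e 0)) * ps (\<beta> 1 + (2 ^ t - 1 - e 1))
                          * ps (\<beta> 2 + (2 ^ t - 1 - e 2))))
            = (\<Sum>\<beta>\<in>exps CARD('k). if \<beta> = e then h e else 0)"
        proof (intro sum.cong refl)
          fix \<beta> assume \<beta>E: "\<beta> \<in> exps CARD('k)"
          show "h \<beta> * (ps (\<beta> 0 + (2 ^ t - 1 - e 0)) * ps (\<beta> 1 + (2 ^ t - 1 - e 1))
                          * ps (\<beta> 2 + (2 ^ t - 1 - e 2))) = (if \<beta> = e then h e else 0)"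
          proof (cases "\<beta> = e")
            case True
            have one: "ps (e i + (2 ^ t - 1 - e i)) = 1" if "i < 3" for i
            proof -
              have "e i + (2 ^ t - 1 - e i) = Q" using ebd that Q_def by auto
              then show ?thesis unfolding ps_def using Q0 by simp
            qed
            show ?thesis using True one[of 0] one[of 1] one[of 2] by simp
          next
            case False
            show ?thesis
            proof (rule ccontr)
              assume nz: "h \<beta> * (ps (\<beta> 0 + (2 ^ t - 1 - e 0)) * ps (\<beta> 1 + (2 ^ t - 1 - e 1))
                          * ps (\<beta> 2 + (2 ^ t - 1 - e 2))) \<noteq> (if \<beta> = e then h e else 0)"
              then have hb: "h \<beta> \<noteq> 0" and p0: "ps (\<beta> 0 + (2 ^ t - 1 - e 0)) \<noteq> 0"
                and p1: "ps (\<beta> 1 + (2 ^ t - 1 - e 1)) \<noteq> 0" and p2: "ps (\<beta> 2 + (2 ^ t - 1 - e 2)) \<noteq> 0"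
                using False by auto
              have \<beta>bd: "\<beta> i \<le> Q" if "i < 4" for i using \<beta>E that CQ unfolding exps_def by auto
              have \<beta>4: "\<beta> i = 0" if "i \<ge> 4" for i using \<beta>E that unfolding exps_def by auto
              have e4: "e i = 0" if "i \<ge> 4" for i using eE that unfolding exps_def by auto
              have b3: "\<beta> 3 = 0" using h_no_x3 hb by auto
              have raise: "\<beta> i = e i \<or> (e i = 0 \<and> \<beta> i = Q)" if i3: "i < 3" for i
              proof -
                have pi: "ps (\<beta> i + (Q - e i)) \<noteq> 0"
                proof -
                  have "i = 0 \<or> i = 1 \<or> i = 2" using i3 by auto
                  moreover have "ps (\<beta> 0 + (Q - e 0)) \<noteq> 0" using p0 unfolding Q_def .
                  moreover have "ps (\<beta> 1 + (Q - e 1)) \<noteq> 0" using p1 unfolding Q_def .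
                  moreover have "ps (\<beta> 2 + (Q - e 2)) \<noteq> 0" using p2 unfolding Q_def .
                  ultimately show ?thesis by (elim disjE) simp_all
                qed
                have cnd: "0 < \<beta> i + (Q - e i) \<and> Q dvd (\<beta> i + (Q - e i))"
                proof (rule ccontr)
                  assume "\<not> (0 < \<beta> i + (Q - e i) \<and> Q dvd (\<beta> i + (Q - e i)))"
                  then have "ps (\<beta> i + (Q - e i)) = 0" unfolding ps_def by (rule if_not_P)
                  then show False using pi by simp
                qed
                have bq: "\<beta> i \<le> Q" using \<beta>bd[of i] i3 by simp
                from cnd have c1: "0 < \<beta> i + (Q - e i)" and c2: "Q dvd (\<beta> i + (Q - e i))" by auto
                show ?thesis by (rule arith_raise[OF bq ebdQ[OF i3] c1 c2])
              qed
              have r4: "\<forall>i. \<beta> i = e i \<or> e i = 0"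
              proof (rule allI)
                fix i
                show "\<beta> i = e i \<or> e i = 0"
                proof (cases "i < 3")
                  case True then show ?thesis using raise[OF True] by auto
                next
                  case f: False
                  then have "i = 3 \<or> i \<ge> 4" by arith
                  then show ?thesis
                  proof
                    assume "i = 3" then show ?thesis using b3 e3 by simp
                  next
                    assume "i \<ge> 4" then show ?thesis using \<beta>4 e4 by simp
                  qed
                qed
              qed
              have "\<exists>i0<3. \<beta> i0 \<noteq> e i0"
              proof (rule ccontr)
                assume "\<not> (\<exists>i0<3. \<beta> i0 \<noteq> e i0)"
                then have eq: "\<forall>i<3. \<beta> i = e i" by simp
                have "\<beta> = e"
                proof (rule ext)
                  fix i
                  show "\<beta> i = e i"
                  proof (cases "i < 3")
                    case True then show ?thesis using eq by simp
                  next
                    case f: False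
                    then have "i = 3 \<or> i \<ge> 4" by arith
                    then show ?thesis
                    proof
                      assume "i = 3" then show ?thesis using b3 e3 by simp
                    next
                      assume "i \<ge> 4" then show ?thesis using \<beta>4 e4 by simp
                    qed
                  qed
                qed
                then show False using False by simp
              qed
              then obtain i0 where i0: "i0 < 3" "\<beta> i0 \<noteq> e i0" by blast
              have ei0: "e i0 = 0" "\<beta> i0 = Q" using raise[OF i0(1)] i0(2) by auto
              have sub: "{i. i < 3 \<and> \<beta> i = 0} \<subset> {i. i < 3 \<and> e i = 0}"
              proof (rule psubsetI)
                show "{i. i < 3 \<and> \<beta> i = 0} \<subseteq> {i. i < 3 \<and> e i = 0}"
                proof (rule subsetI)
                  fix i assume "i \<in> {i. i < 3 \<and> \<beta> i = 0}"
                  then have i: "i < 3" "\<beta> i = 0" by auto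
                  then show "i \<in> {i. i < 3 \<and> e i = 0}" using raise[OF i(1)] Q0 by auto
                qed
                have m1: "i0 \<in> {i. i < 3 \<and> e i = 0}" using ei0 i0(1) by simp
                have m2: "i0 \<notin> {i. i < 3 \<and> \<beta> i = 0}" using ei0 Q0 by simp
                show "{i. i < 3 \<and> \<beta> i = 0} \<noteq> {i. i < 3 \<and> e i = 0}"
                  using m1 m2 by metis
              qed
              have "card {i. i < 3 \<and> \<beta> i = 0} < card {i. i < 3 \<and> e i = 0}"
                by (rule psubset_card_mono[OF finite_subset[of _ "{..<3::nat}"] sub]) auto
              then have nb: "\<not> (\<exists>j0<t. 2 \<le> digit_deg \<beta> j0)" by (rule less.IH[OF _ hb])
              have "2 \<le> digit_deg \<beta> j0" using dde2[OF r4] j0(2) by simp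
              then show False using nb j0(1) by auto
            qed
          qed
        qed
        also have "\<dots> = h e" by (simp add: sum.delta[OF finite_exps] eE)
        finally show ?thesis using phi_h by simp
      qed
      then show False using phi0 less.prems by simp
    qed
  qed
  show ?thesis
  proof (rule allI, intro impI)
    fix e :: "nat \<Rightarrow> nat"
    assume he: "h e \<noteq> 0" and enz: "e \<noteq> (\<lambda>i. 0)"
    have le1: "digit_deg e j \<le> 1" if "j < t" for j
    proof -
      have "\<not> 2 \<le> digit_deg e j" using main[OF he] that by auto
      then show ?thesis by simp
    qed
    have eE: "e \<in> exps CARD('k)" using hE he .
    have elt: "e i < 2 ^ t" if "i < 4" for i
      using eE that CQ Q_def Q0 unfolding exps_def by auto
    have e4: "e i = 0" if "i \<ge> 4" for i using eE that unfolding exps_def by auto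
    have sumE: "(\<Sum>i<4. e i) = (\<Sum>j<t. digit_deg e j * 2 ^ j)"
    proof -
      have "(\<Sum>i<4. e i) = (\<Sum>i<4::nat. \<Sum>j<t. bitn (e i) j * 2 ^ j)"
        by (intro sum.cong refl) (rule bin_exp'[OF elt], simp)
      also have "\<dots> = (\<Sum>j<t. \<Sum>i<4::nat. bitn (e i) j * 2 ^ j)" by (rule sum.swap)
      also have "\<dots> = (\<Sum>j<t. digit_deg e j * 2 ^ j)"
        unfolding digit_deg_def bitn_def by (simp add: sum_distrib_right)
      finally show ?thesis .
    qed
    obtain i1 where i1: "e i1 \<noteq> 0" using enz by (metis ext)
    have i14: "i1 < 4" using e4 i1 by (meson not_less)
    have pos: "0 < (\<Sum>i<4. e i)"
    proof (rule ccontr)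
      assume "\<not> 0 < (\<Sum>i<4. e i)"
      then have "(\<Sum>i<4. e i) = 0" by simp
      then have "\<forall>i\<in>{..<4::nat}. e i = 0" by simp
      then show False using i1 i14 by simp
    qed
    have geQ: "Q \<le> (\<Sum>i<4. e i)" using dvd_imp_le[OF hD[OF he] pos] .
    show "\<forall>j<t. digit_deg e j = 1"
    proof (rule ccontr)
      assume "\<not> (\<forall>j<t. digit_deg e j = 1)"
      then obtain j1 where j1: "j1 < t" "digit_deg e j1 \<noteq> 1" by blast
      have z: "digit_deg e j1 = 0" using le1[OF j1(1)] j1(2) by simp
      have "(\<Sum>j<t. digit_deg e j * 2 ^ j) < (\<Sum>j<t. (2::nat) ^ j)"
      proof (rule sum_strict_mono_ex1)
        show "finite {..<t}" by simp
        show "\<forall>x\<in>{..<t}. digit_deg e x * 2 ^ x \<le> 2 ^ x" using le1 by simp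
        show "\<exists>a\<in>{..<t}. digit_deg e a * 2 ^ a < 2 ^ a" using z j1(1) by auto
      qed
      then show False using sumE geQ sum_pow2[of t] Q_def by simp
    qed
  qed
qed


end
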